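(* Let $G$ be a connected graph with adjacency matrix $A$, $d=A\mathbf 1$, $D=\mathrm{diag}(d)$, let $e=(i,j)$, $i\ne j$, $a_{ij}>0$, be an edge that is not a cut-edge, and $v=e_i-e_j$. For $t\in[0,1]$ let $A(t)=A+ta_{ij}vv^T$ (so $A(t)\mathbf 1=d$), $P(t)=D^{-1}A(t)$ (irreducible stochastic) and $f(t)=K(P(t))$. Let $1=\lambda_1,\lambda_2,\dots,\lambda_n$ be the eigenvalues of $P(0)=D^{-1}A$. Then the (right) derivative $f'(0)$ exists and \[ 0\le f'(0)\le a_{ij}\big(d_i^{-1}+d_j^{-1}\big)\sum_{\ell=2}^n\frac{1}{(1-\lambda_\ell)^2}. \]
   Context: Graphs are undirected and possibly weighted on vertex set $\{1,\dots,n\}$, with symmetric nonnegative adjacency matrix $A=(a_{k\ell})$; $d=A\mathbf 1$ (all entries assumed positive); $e_k$ is the $k$-th column of the identity and $\mathbf 1$ the all-ones vector. For an irreducible row-stochastic matrix $Q$ with stationary vector $\pi$, the Kemeny constant is $K(Q)=\sum_j\pi_j m_{kj}$, where $m_{kj}$ is the expected first passage time from $k$ to $j$ ($m_{kk}=0$), independent of $k$; equivalently $K(Q)=\sum_{\ell=2}^n 1/(1-\lambda_\ell)$, where $1=\lambda_1,\lambda_2,\dots,\lambda_n$ are the eigenvalues of $Q$. The edge $e$ is a cut-edge if the graph obtained by deleting $e$ is disconnected. *)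

theory Defs
  imports "Jordan_Normal_Form.Char_Poly" Complex_Main
begin

text \<open>Vertices are indexed 0..n-1 (JNF convention) instead of 1..n.\<close>

definition adj_rel :: "nat \<Rightarrow> real mat \<Rightarrow> (nat \<times> nat) set" where
  "adj_rel n A = {(k,l). k < n \<and> l < n \<and> k \<noteq> l \<and> A $$ (k,l) > 0}"

definition connected_wgraph :: "nat \<Rightarrow> real mat \<Rightarrow> bool" where
  "connected_wgraph n A \<longleftrightarrow> (\<forall>k<n. \<forall>l<n. (k,l) \<in> (adj_rel n A)\<^sup>*)"

definition delete_edge :: "nat \<Rightarrow> real mat \<Rightarrow> nat \<Rightarrow> nat \<Rightarrow> real mat" where
  "delete_edge n A i j = mat n n (\<lambda>(k,l). if (k = i \<and> l = j) \<or> (k = j \<and> l = i) then 0 else A $$ (k,l))"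

definition is_cut_edge :: "nat \<Rightarrow> real mat \<Rightarrow> nat \<Rightarrow> nat \<Rightarrow> bool" where
  "is_cut_edge n A i j \<longleftrightarrow> \<not> connected_wgraph n (delete_edge n A i j)"

definition stationary_vec :: "real mat \<Rightarrow> (nat \<Rightarrow> real) \<Rightarrow> bool" where
  "stationary_vec Q p \<longleftrightarrow> (let n = dim_row Q in
     (\<forall>k<n. p k \<ge> 0) \<and> (\<forall>k\<ge>n. p k = 0) \<and> (\<Sum>k<n. p k) = 1 \<and>
     (\<forall>l<n. (\<Sum>k<n. p k * Q $$ (k,l)) = p l))"

text \<open>Taboo matrix: transitions avoiding state j.  For k \<noteq> j,
  Prob_k(T_j > t) = sum_l (taboo Q j ^ t)_{kl}, where T_j is the first passage time to j.\<close>
definition taboo :: "real mat \<Rightarrow> nat \<Rightarrow> real mat" where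
  "taboo Q j = mat (dim_row Q) (dim_row Q) (\<lambda>(k,l). if k \<noteq> j \<and> l \<noteq> j then Q $$ (k,l) else 0)"

text \<open>Expected first passage time m_{kj} = sum_{t>=0} Prob_k(T_j > t), with m_{jj} = 0.\<close>
definition mfpt :: "real mat \<Rightarrow> nat \<Rightarrow> nat \<Rightarrow> real" where
  "mfpt Q k j = (if k = j then 0 else (\<Sum>t. \<Sum>l<dim_row Q. (taboo Q j ^\<^sub>m t) $$ (k,l)))"

text \<open>Kemeny constant K(Q) = sum_j pi_j m_{kj}, evaluated at k = 0 (first vertex).\<close>
definition kemeny :: "real mat \<Rightarrow> real" where
  "kemeny Q = (let p = (THE p. stationary_vec Q p) in (\<Sum>j<dim_row Q. p j * mfpt Q 0 j))"

end

theory Submission imports Defs "Jordan_Normal_Form.Schur_Decomposition" begin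

lemma mult_entry:
  assumes "A \<in> carrier_mat n m" "B \<in> carrier_mat m p" "k < n" "l < p"
  shows "(A * B) $$ (k,l) = (\<Sum>q<m. A $$ (k,q) * B $$ (q,l))"
  using assms by (auto simp: scalar_prod_def lessThan_atLeast0 intro!: sum.cong)

lemma dsum: "k < (n::nat) \<Longrightarrow> (\<Sum>m<n. (if k = m then 1 else 0) * (f m :: real)) = f k"
proof -
  assume k: "k < n"
  have "(\<Sum>m<n. (if k = m then 1 else 0) * (f m :: real)) = (\<Sum>m<n. if k = m then f m else 0)"
    by (rule sum.cong) auto
  then show ?thesis using k by simp
qed

lemma dsum': "k < (n::nat) \<Longrightarrow> (\<Sum>m<n. (if m = k then 1 else 0) * (f m :: real)) = f k"
proof -
  assume k: "k < n"
  have "(\<Sum>m<n. (if m = k then 1 else 0) * (f m :: real)) = (\<Sum>m<n. if k = m then f m else 0)"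
    by (rule sum.cong) auto
  then show ?thesis using k by simp
qed

definition Nmat :: "nat \<Rightarrow> real mat \<Rightarrow> (nat \<Rightarrow> real) \<Rightarrow> real mat" where
  "Nmat n Q pp = mat n n (\<lambda>(k,l). (if k = l then 1 else 0) - Q $$ (k,l) + pp l)"

definition Zmat :: "nat \<Rightarrow> real mat \<Rightarrow> (nat \<Rightarrow> real) \<Rightarrow> real mat" where
  "Zmat n Q pp = (SOME Z. Z \<in> carrier_mat n n \<and> Nmat n Q pp * Z = 1\<^sub>m n \<and> Z * Nmat n Q pp = 1\<^sub>m n)"

locale mk =
  fixes n :: nat and Q A :: "real mat" and pp :: "nat \<Rightarrow> real"
  assumes Qc: "Q \<in> carrier_mat n n"
    and Qnn: "\<And>k l. k < n \<Longrightarrow> l < n \<Longrightarrow> Q $$ (k,l) \<ge> 0"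
    and Qrow: "\<And>k. k < n \<Longrightarrow> (\<Sum>l<n. Q $$ (k,l)) = 1"
    and pipos: "\<And>k. k < n \<Longrightarrow> pp k > 0"
    and pisum: "(\<Sum>k<n. pp k) = 1"
    and pistat: "\<And>l. l < n \<Longrightarrow> (\<Sum>k<n. pp k * Q $$ (k,l)) = pp l"
    and conn: "connected_wgraph n A"
    and adjpos: "\<And>k l. (k,l) \<in> adj_rel n A \<Longrightarrow> Q $$ (k,l) > 0"
begin

lemma maxp:
  assumes j: "j < n" and sub: "\<And>k. k < n \<Longrightarrow> k \<noteq> j \<Longrightarrow> x k \<le> (\<Sum>l<n. Q $$ (k,l) * x l)"
    and xj: "x j \<le> 0" and k: "k < n"
  shows "x k \<le> 0"
proof -
  define M where "M = Max (x ` {..<n})"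
  have fin: "finite (x ` {..<n})" by simp
  have ne: "x ` {..<n} \<noteq> {}" using j by auto
  have xle: "\<And>l. l < n \<Longrightarrow> x l \<le> M" unfolding M_def using fin by auto
  obtain k0 where k0: "k0 < n" "x k0 = M"
    using Max_in[OF fin ne] unfolding M_def by auto
  have "M \<le> 0"
  proof (rule ccontr)
    assume Mpos: "\<not> M \<le> 0"
    have "\<forall>l. (k0,l) \<in> (adj_rel n A)\<^sup>* \<longrightarrow> x l = M"
    proof (intro allI impI)
      fix l assume "(k0,l) \<in> (adj_rel n A)\<^sup>*"
      then show "x l = M"
      proof (induction rule: rtrancl_induct)
        case base then show ?case using k0 by simp
      next
        case (step y z)
        from step(2) have yz: "y < n" "z < n" "y \<noteq> z" unfolding adj_rel_def by auto
        have Qyz: "Q $$ (y,z) > 0" using adjpos[OF step(2)] .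
        have yj: "y \<noteq> j" using step(3) xj Mpos by auto
        have "M \<le> (\<Sum>l<n. Q $$ (y,l) * x l)" using sub[OF yz(1) yj] step(3) by simp
        moreover have "(\<Sum>l<n. Q $$ (y,l) * (M - x l)) = M * (\<Sum>l<n. Q $$ (y,l)) - (\<Sum>l<n. Q $$ (y,l) * x l)"
          unfolding sum_distrib_left sum_subtractf[symmetric] by (rule sum.cong) (auto simp: algebra_simps)
        ultimately have "(\<Sum>l<n. Q $$ (y,l) * (M - x l)) \<le> 0"
          using Qrow[OF yz(1)] by simp
        moreover have "\<forall>l\<in>{..<n}. Q $$ (y,l) * (M - x l) \<ge> 0"
          using Qnn[OF yz(1)] xle by auto
        ultimately have "(\<Sum>l<n. Q $$ (y,l) * (M - x l)) = 0"
          by (meson order_antisym sum_nonneg)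
        hence "\<forall>l\<in>{..<n}. Q $$ (y,l) * (M - x l) = 0"
          using sum_nonneg_eq_0_iff[of "{..<n}" "\<lambda>l. Q $$ (y,l) * (M - x l)"] Qnn[OF yz(1)] xle
          by auto
        hence "Q $$ (y,z) * (M - x z) = 0" using yz by auto
        then show ?case using Qyz by simp
      qed
    qed
    moreover have "(k0,j) \<in> (adj_rel n A)\<^sup>*" using conn k0 j unfolding connected_wgraph_def by auto
    ultimately have "x j = M" by auto
    then show False using xj Mpos by simp
  qed
  then show ?thesis using xle[OF k] by simp
qed

lemma harm_const:
  assumes h: "\<And>k. k < n \<Longrightarrow> (\<Sum>l<n. Q $$ (k,l) * x l) = x k"
    and k: "k < n" and l: "l < n"
  shows "x k = x l"
proof -
  have le: "x a \<le> x b" if a: "a < n" and b: "b < n" for a b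
  proof -
    have "x a - x b \<le> 0"
    proof (rule maxp[OF b _ _ a, of "\<lambda>m. x m - x b"])
      fix k assume kn: "k < n" and "k \<noteq> b"
      have "(\<Sum>l<n. Q $$ (k,l) * (x l - x b)) = (\<Sum>l<n. Q $$ (k,l) * x l) - (\<Sum>l<n. Q $$ (k,l)) * x b"
        by (simp add: right_diff_distrib sum_subtractf sum_distrib_right)
      also have "\<dots> = x k - x b" using h[OF kn] Qrow[OF kn] by simp
      finally show "x k - x b \<le> (\<Sum>l<n. Q $$ (k,l) * (x l - x b))" by simp
    qed simp
    then show ?thesis by simp
  qed
  show ?thesis using le[OF k l] le[OF l k] by simp
qed


lemma Nc: "Nmat n Q pp \<in> carrier_mat n n" unfolding Nmat_def by simp

lemma N_entry: "k < n \<Longrightarrow> l < n \<Longrightarrow> Nmat n Q pp $$ (k,l) = (if k = l then 1 else 0) - Q $$ (k,l) + pp l"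
  unfolding Nmat_def by simp

lemma delta_sum: "k < n \<Longrightarrow> (\<Sum>m<n. (if k = m then 1 else 0) * (f m :: real)) = f k"
proof -
  assume k: "k < n"
  have "(\<Sum>m<n. (if k = m then 1 else 0) * (f m :: real)) = (\<Sum>m<n. if k = m then f m else 0)"
    by (rule sum.cong) auto
  then show ?thesis using k by simp
qed

lemma delta_sum': "k < n \<Longrightarrow> (\<Sum>m<n. (if m = k then 1 else 0) * (f m :: real)) = f k"
proof -
  assume k: "k < n"
  have "(\<Sum>m<n. (if m = k then 1 else 0) * (f m :: real)) = (\<Sum>m<n. if k = m then f m else 0)"
    by (rule sum.cong) auto
  then show ?thesis using k by simp
qed

lemma Qpp_swap: "(\<Sum>k<n. pp k * (\<Sum>l<n. Q $$ (k,l) * x l)) = (\<Sum>l<n. pp l * x l)"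
proof -
  have "(\<Sum>k<n. pp k * (\<Sum>l<n. Q $$ (k,l) * x l)) = (\<Sum>l<n. (\<Sum>k<n. pp k * Q $$ (k,l)) * x l)"
    unfolding sum_distrib_left sum_distrib_right by (subst sum.swap) (simp add: mult.assoc)
  also have "\<dots> = (\<Sum>l<n. pp l * x l)" using pistat by simp
  finally show ?thesis .
qed

lemma detN: "det (Nmat n Q pp) \<noteq> 0"
proof
  assume "det (Nmat n Q pp) = 0"
  then obtain x where x: "x \<in> carrier_vec n" "x \<noteq> 0\<^sub>v n" "Nmat n Q pp *\<^sub>v x = 0\<^sub>v n"
    using det_0_iff_vec_prod_zero[OF Nc] by auto
  define s where "s = (\<Sum>l<n. pp l * x $ l)"
  have e: "x $ k - (\<Sum>l<n. Q $$ (k,l) * x $ l) + s = 0" if k: "k < n" for k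
  proof -
    have "0 = (Nmat n Q pp *\<^sub>v x) $ k" using x(3) k by simp
    also have "\<dots> = (\<Sum>l<n. Nmat n Q pp $$ (k,l) * x $ l)"
      using k x(1) Nc by (auto simp: scalar_prod_def lessThan_atLeast0 intro!: sum.cong)
    also have "\<dots> = (\<Sum>l<n. (if k = l then 1 else 0) * x $ l - Q $$ (k,l) * x $ l + pp l * x $ l)"
      using k by (intro sum.cong) (auto simp: N_entry algebra_simps)
    also have "\<dots> = x $ k - (\<Sum>l<n. Q $$ (k,l) * x $ l) + s"
      unfolding s_def sum.distrib sum_subtractf using delta_sum[OF k] by simp
    finally show ?thesis by simp
  qed
  have "(\<Sum>k<n. pp k * (x $ k - (\<Sum>l<n. Q $$ (k,l) * x $ l) + s)) = 0"
    using e by simp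
  moreover have "(\<Sum>k<n. pp k * (x $ k - (\<Sum>l<n. Q $$ (k,l) * x $ l) + s)) = 
     (\<Sum>k<n. pp k * x $ k) - (\<Sum>k<n. pp k * (\<Sum>l<n. Q $$ (k,l) * x $ l)) + (\<Sum>k<n. pp k) * s"
    by (simp add: algebra_simps sum.distrib sum_subtractf sum_distrib_right sum_distrib_left)
  ultimately have s0: "s = 0" unfolding Qpp_swap pisum s_def by simp
  have h: "(\<Sum>l<n. Q $$ (k,l) * x $ l) = x $ k" if "k < n" for k using e[OF that] s0 by simp
  have n0: "0 < n" using x(1,2) by (cases n) auto
  have c: "x $ k = x $ 0" if "k < n" for k using harm_const[of "\<lambda>l. x $ l", OF h that n0] by simp
  have "s = (\<Sum>l<n. pp l * x $ 0)" unfolding s_def by (rule sum.cong) (auto dest: c)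
  also have "\<dots> = x $ 0" by (simp only: sum_distrib_right[symmetric] pisum mult_1)
  finally have "s = x $ 0" .
  hence x0: "x $ k = 0" if "k < n" for k using s0 c[OF that] by simp
  hence "x = 0\<^sub>v n" using x(1) by (intro eq_vecI) auto
  with x(2) show False by simp
qed

lemma Z_ex: "\<exists>Z. Z \<in> carrier_mat n n \<and> Nmat n Q pp * Z = 1\<^sub>m n \<and> Z * Nmat n Q pp = 1\<^sub>m n"
proof -
  have "Nmat n Q pp \<in> Units (ring_mat TYPE(real) n undefined)"
    by (rule det_non_zero_imp_unit[OF Nc detN])
  then show ?thesis unfolding Units_def by (auto simp: ring_mat_simps)
qed

lemma Z: "Zmat n Q pp \<in> carrier_mat n n" "Nmat n Q pp * Zmat n Q pp = 1\<^sub>m n" "Zmat n Q pp * Nmat n Q pp = 1\<^sub>m n"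
  using someI_ex[OF Z_ex] unfolding Zmat_def by auto

abbreviation "ZZ \<equiv> Zmat n Q pp"
abbreviation "NN \<equiv> Nmat n Q pp"

lemma NZ: "k < n \<Longrightarrow> l < n \<Longrightarrow> (\<Sum>m<n. NN $$ (k,m) * ZZ $$ (m,l)) = (if k = l then 1 else 0)"
  using mult_entry[OF Nc Z(1), of k l] Z(2) by simp

lemma ZN: "k < n \<Longrightarrow> l < n \<Longrightarrow> (\<Sum>m<n. ZZ $$ (k,m) * NN $$ (m,l)) = (if k = l then 1 else 0)"
  using mult_entry[OF Z(1) Nc, of k l] Z(3) by simp

lemma N_rowsum: "m < n \<Longrightarrow> (\<Sum>l<n. NN $$ (m,l)) = 1"
  by (simp add: N_entry sum.distrib sum_subtractf Qrow pisum)

lemma N_pisum: "m < n \<Longrightarrow> (\<Sum>k<n. pp k * NN $$ (k,m)) = pp m"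
proof -
  assume m: "m < n"
  have "(\<Sum>k<n. pp k * NN $$ (k,m)) = (\<Sum>k<n. (if k = m then 1 else 0) * pp k - pp k * Q $$ (k,m) + pp k * pp m)"
    using m by (intro sum.cong) (auto simp: N_entry algebra_simps)
  also have "\<dots> = pp m - pp m + pp m"
    unfolding sum.distrib sum_subtractf delta_sum'[OF m] pistat[OF m] sum_distrib_right[symmetric] pisum
    by simp
  finally show ?thesis by simp
qed

lemma Z_row: "k < n \<Longrightarrow> (\<Sum>l<n. ZZ $$ (k,l)) = 1"
proof -
  assume k: "k < n"
  have "(\<Sum>l<n. \<Sum>m<n. ZZ $$ (k,m) * NN $$ (m,l)) = (\<Sum>l<n. (if k = l then 1 else 0))"
    using ZN k by simp
  also have "\<dots> = 1" using k by simp
  moreover have "(\<Sum>l<n. \<Sum>m<n. ZZ $$ (k,m) * NN $$ (m,l)) = (\<Sum>m<n. ZZ $$ (k,m) * (\<Sum>l<n. NN $$ (m,l)))"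
    unfolding sum_distrib_left by (rule sum.swap)
  ultimately have "1 = (\<Sum>m<n. ZZ $$ (k,m) * (\<Sum>l<n. NN $$ (m,l)))" by simp
  also have "\<dots> = (\<Sum>m<n. ZZ $$ (k,m))" using N_rowsum by simp
  finally show ?thesis by simp
qed

lemma Z_pi: "l < n \<Longrightarrow> (\<Sum>k<n. pp k * ZZ $$ (k,l)) = pp l"
proof -
  assume l: "l < n"
  have "(\<Sum>k<n. pp k * (\<Sum>m<n. NN $$ (k,m) * ZZ $$ (m,l))) = (\<Sum>k<n. pp k * (if k = l then 1 else 0))"
    using NZ l by simp
  also have "\<dots> = pp l" using l by (simp add: if_distrib cong: if_cong)
  moreover have "(\<Sum>k<n. pp k * (\<Sum>m<n. NN $$ (k,m) * ZZ $$ (m,l))) = (\<Sum>m<n. (\<Sum>k<n. pp k * NN $$ (k,m)) * ZZ $$ (m,l))"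
    unfolding sum_distrib_left sum_distrib_right by (subst sum.swap) (simp add: mult.assoc)
  ultimately have "pp l = (\<Sum>m<n. (\<Sum>k<n. pp k * NN $$ (k,m)) * ZZ $$ (m,l))" by simp
  also have "\<dots> = (\<Sum>m<n. pp m * ZZ $$ (m,l))" using N_pisum by simp
  finally show ?thesis by simp
qed

lemma QZ: "k < n \<Longrightarrow> l < n \<Longrightarrow> (\<Sum>m<n. Q $$ (k,m) * ZZ $$ (m,l)) = ZZ $$ (k,l) + pp l - (if k = l then 1 else 0)"
proof -
  assume k: "k < n" and l: "l < n"
  have "(if k = l then 1 else 0) = (\<Sum>m<n. NN $$ (k,m) * ZZ $$ (m,l))" using NZ k l by simp
  also have "\<dots> = (\<Sum>m<n. (if k = m then 1 else 0) * ZZ $$ (m,l) - Q $$ (k,m) * ZZ $$ (m,l) + pp m * ZZ $$ (m,l))"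
    using k by (intro sum.cong) (auto simp: N_entry algebra_simps)
  also have "\<dots> = ZZ $$ (k,l) - (\<Sum>m<n. Q $$ (k,m) * ZZ $$ (m,l)) + pp l"
    unfolding sum.distrib sum_subtractf using delta_sum[OF k] Z_pi[OF l] by simp
  finally show ?thesis by simp
qed


lemma dimQ: "dim_row Q = n" using Qc by simp

lemma stat_unique: assumes st: "stationary_vec Q p" and m: "m < n" shows "p m = pp m"
proof -
  from st have pn: "(\<Sum>k<n. p k) = 1" and pst: "\<And>l. l < n \<Longrightarrow> (\<Sum>k<n. p k * Q $$ (k,l)) = p l"
    unfolding stationary_vec_def Let_def dimQ by auto
  have pN: "(\<Sum>k<n. p k * NN $$ (k,l)) = pp l" if l: "l < n" for l
  proof -
    have "(\<Sum>k<n. p k * NN $$ (k,l)) = (\<Sum>k<n. (if k = l then 1 else 0) * p k - p k * Q $$ (k,l) + p k * pp l)"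
      using l by (intro sum.cong) (auto simp: N_entry algebra_simps)
    also have "\<dots> = pp l"
      unfolding sum.distrib sum_subtractf delta_sum'[OF l] pst[OF l] sum_distrib_right[symmetric] pn
      by simp
    finally show ?thesis .
  qed
  have "(\<Sum>k<n. p k * (\<Sum>l<n. NN $$ (k,l) * ZZ $$ (l,m))) = (\<Sum>k<n. (if k = m then 1 else 0) * p k)"
    by (rule sum.cong) (auto simp: NZ m)
  then have "p m = (\<Sum>k<n. p k * (\<Sum>l<n. NN $$ (k,l) * ZZ $$ (l,m)))"
    using delta_sum'[OF m, of p] by simp
  also have "\<dots> = (\<Sum>l<n. (\<Sum>k<n. p k * NN $$ (k,l)) * ZZ $$ (l,m))"
    unfolding sum_distrib_left sum_distrib_right by (subst sum.swap) (simp add: mult.assoc)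
  also have "\<dots> = pp m" using pN Z_pi[OF m] by simp
  finally show ?thesis .
qed

definition "pe = (\<lambda>k. if k < n then pp k else 0)"

lemma THE_stat: "(THE p. stationary_vec Q p) = pe"
proof (rule the_equality)
  show "stationary_vec Q pe"
    unfolding stationary_vec_def Let_def dimQ pe_def using pipos pisum pistat
    by (auto simp: less_imp_le)
next
  fix p assume st: "stationary_vec Q p"
  show "p = pe"
  proof
    fix k show "p k = pe k"
    proof (cases "k < n")
      case True then show ?thesis using stat_unique[OF st True] by (simp add: pe_def)
    next
      case False then show ?thesis using st unfolding stationary_vec_def Let_def dimQ pe_def by auto
    qed
  qed
qed

lemma pow_Suc_left: assumes "B \<in> carrier_mat n n" shows "B ^\<^sub>m Suc t = B * B ^\<^sub>m t"
proof (induction t)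
  case 0 then show ?case using assms by simp
next
  case (Suc t)
  have "B ^\<^sub>m Suc (Suc t) = (B * B ^\<^sub>m t) * B" using Suc by simp
  also have "\<dots> = B * (B ^\<^sub>m t * B)" using assms by (simp add: assoc_mult_mat[of _ n n _ n _ n])
  finally show ?case by simp
qed

context
  fixes j :: nat assumes j: "j < n"
begin

abbreviation "TT \<equiv> taboo Q j"

lemma Tc: "TT \<in> carrier_mat n n" unfolding taboo_def dimQ by simp

lemma T_entry: "k < n \<Longrightarrow> l < n \<Longrightarrow> TT $$ (k,l) = (if k \<noteq> j \<and> l \<noteq> j then Q $$ (k,l) else 0)"
  unfolding taboo_def dimQ by simp

lemma T_nn: "k < n \<Longrightarrow> l < n \<Longrightarrow> TT $$ (k,l) \<ge> 0" using T_entry Qnn by simp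

definition "ss t k = (\<Sum>l<n. (TT ^\<^sub>m t) $$ (k,l))"

lemma ss0: "k < n \<Longrightarrow> ss 0 k = 1"
  unfolding ss_def using Tc by (simp add: dimQ)

lemma ssSuc: assumes k: "k < n" shows "ss (Suc t) k = (\<Sum>m<n. TT $$ (k,m) * ss t m)"
proof -
  have "ss (Suc t) k = (\<Sum>l<n. (TT * TT ^\<^sub>m t) $$ (k,l))"
    unfolding ss_def pow_Suc_left[OF Tc] ..
  also have "\<dots> = (\<Sum>l<n. \<Sum>m<n. TT $$ (k,m) * (TT ^\<^sub>m t) $$ (m,l))"
    using k by (intro sum.cong refl mult_entry[OF Tc]) (auto simp: Tc)
  also have "\<dots> = (\<Sum>m<n. TT $$ (k,m) * ss t m)"
    unfolding ss_def sum_distrib_left by (rule sum.swap)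
  finally show ?thesis .
qed

lemma ss_nn: "k < n \<Longrightarrow> ss t k \<ge> 0"
proof (induction t arbitrary: k)
  case 0 then show ?case by (simp add: ss0)
next
  case (Suc t) then show ?case by (auto simp: ssSuc intro!: sum_nonneg mult_nonneg_nonneg T_nn)
qed

definition "hh k = (ZZ $$ (j,j) - ZZ $$ (k,j)) / pp j"

lemma hj: "hh j = 0" unfolding hh_def by simp

lemma h_eq: assumes k: "k < n" and kj: "k \<noteq> j" shows "hh k = 1 + (\<Sum>m<n. Q $$ (k,m) * hh m)"
proof -
  have pj: "pp j > 0" using pipos j by simp
  have "(\<Sum>m<n. Q $$ (k,m) * hh m) = (\<Sum>m<n. Q $$ (k,m) * ZZ $$ (j,j) - Q $$ (k,m) * ZZ $$ (m,j)) / pp j"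
    unfolding hh_def sum_divide_distrib by (rule sum.cong) (simp_all add: algebra_simps diff_divide_distrib)
  also have "\<dots> = (ZZ $$ (j,j) - (ZZ $$ (k,j) + pp j)) / pp j"
    unfolding sum_subtractf sum_distrib_right[symmetric] Qrow[OF k] QZ[OF k j] using kj by simp
  also have "\<dots> = hh k - 1" unfolding hh_def using pj by (simp add: field_simps)
  finally show ?thesis by simp
qed

lemma h_nn: assumes k: "k < n" shows "hh k \<ge> 0"
proof -
  have "- hh k \<le> 0"
  proof (rule maxp[OF j _ _ k])
    fix k assume "k < n" "k \<noteq> j"
    then show "- hh k \<le> (\<Sum>l<n. Q $$ (k,l) * - hh l)"
      using h_eq[of k] by (simp add: sum_negf)
  qed (simp add: hj)
  then show ?thesis by simp
qed

definition "hh' k = (if k = j then 1 else hh k)"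

lemma T_h': assumes k: "k < n" shows "(\<Sum>m<n. TT $$ (k,m) * hh' m) = (if k = j then 0 else hh k - 1)"
proof (cases "k = j")
  case True then show ?thesis using k by (simp add: T_entry)
next
  case False
  have "(\<Sum>m<n. TT $$ (k,m) * hh' m) = (\<Sum>m<n. Q $$ (k,m) * hh m)"
    using k False by (intro sum.cong) (auto simp: T_entry hh'_def hj)
  then show ?thesis using h_eq[OF k False] False by simp
qed

lemma ss_bound: "k < n \<Longrightarrow> (\<Sum>t<M. ss t k) \<le> hh' k"
proof (induction M arbitrary: k)
  case 0 then show ?case using h_nn by (simp add: hh'_def)
next
  case (Suc M)
  have "(\<Sum>t<Suc M. ss t k) = 1 + (\<Sum>t<M. \<Sum>m<n. TT $$ (k,m) * ss t m)"
    unfolding sum.lessThan_Suc_shift using Suc(2) by (simp add: ss0 ssSuc)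
  also have "\<dots> = 1 + (\<Sum>m<n. TT $$ (k,m) * (\<Sum>t<M. ss t m))"
    unfolding sum_distrib_left by (subst sum.swap) simp
  also have "\<dots> \<le> 1 + (\<Sum>m<n. TT $$ (k,m) * hh' m)"
    using Suc T_nn by (intro add_left_mono sum_mono mult_left_mono) auto
  also have "\<dots> = hh' k" using T_h'[OF Suc(2)] by (simp add: hh'_def)
  finally show ?case .
qed

lemma ss_summable: "k < n \<Longrightarrow> summable (\<lambda>t. ss t k)"
  by (rule summableI_nonneg_bounded[where x="hh' k"]) (auto simp: ss_nn ss_bound)

definition "mm k = (\<Sum>t. ss t k)"

lemma mm_le: "k < n \<Longrightarrow> mm k \<le> hh' k"
  unfolding mm_def by (rule suminf_le_const[OF ss_summable]) (auto simp: ss_bound)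

lemma mm_eq: assumes k: "k < n" shows "mm k = 1 + (\<Sum>m<n. TT $$ (k,m) * mm m)"
proof -
  have "(\<Sum>t. ss (Suc t) k) = mm k - 1"
    unfolding mm_def using suminf_split_head[OF ss_summable[OF k]] ss0[OF k] by simp
  moreover have "(\<Sum>t. ss (Suc t) k) = (\<Sum>m<n. TT $$ (k,m) * mm m)"
  proof -
    have "(\<Sum>t. ss (Suc t) k) = (\<Sum>t. \<Sum>m<n. TT $$ (k,m) * ss t m)"
      using ssSuc[OF k] by simp
    also have "\<dots> = (\<Sum>m<n. \<Sum>t. TT $$ (k,m) * ss t m)"
      by (rule suminf_sum) (auto intro: summable_mult ss_summable)
    also have "\<dots> = (\<Sum>m<n. TT $$ (k,m) * mm m)"
      unfolding mm_def by (intro sum.cong refl suminf_mult ss_summable) auto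
    finally show ?thesis .
  qed
  ultimately show ?thesis by simp
qed

lemma mm_h: assumes k: "k < n" and kj: "k \<noteq> j" shows "mm k = hh k"
proof -
  define x where "x m = (if m = j then 0 else hh m - mm m)" for m
  have "x k \<le> 0"
  proof (rule maxp[OF j _ _ k])
    fix k assume k: "k < n" and kj: "k \<noteq> j"
    have "x k = (1 + (\<Sum>m<n. Q $$ (k,m) * hh m)) - (1 + (\<Sum>m<n. TT $$ (k,m) * mm m))"
      unfolding x_def using h_eq[OF k kj] mm_eq[OF k] kj by simp
    also have "\<dots> = (\<Sum>m<n. Q $$ (k,m) * hh m - TT $$ (k,m) * mm m)"
      by (simp add: sum_subtractf)
    also have "\<dots> = (\<Sum>m<n. Q $$ (k,m) * x m)"
      using k kj by (intro sum.cong) (auto simp: x_def T_entry hj algebra_simps)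
    finally show "x k \<le> (\<Sum>m<n. Q $$ (k,m) * x m)" by simp
  qed (simp add: x_def)
  then have "hh k \<le> mm k" using kj by (simp add: x_def)
  moreover have "mm k \<le> hh k" using mm_le[OF k] kj by (simp add: hh'_def)
  ultimately show ?thesis by simp
qed

lemma mfpt_formula: assumes k: "k < n" shows "mfpt Q k j = (ZZ $$ (j,j) - ZZ $$ (k,j)) / pp j"
proof (cases "k = j")
  case True then show ?thesis by (simp add: mfpt_def)
next
  case False
  have "mfpt Q k j = mm k" unfolding mfpt_def mm_def ss_def dimQ using False by simp
  then show ?thesis using mm_h[OF k False] by (simp add: hh_def)
qed

end

lemma kemeny_formula: assumes n0: "0 < n" shows "kemeny Q = (\<Sum>k<n. ZZ $$ (k,k)) - 1"
proof -
  have "kemeny Q = (\<Sum>j<n. pe j * mfpt Q 0 j)" unfolding kemeny_def Let_def THE_stat dimQ ..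
  also have "\<dots> = (\<Sum>j<n. ZZ $$ (j,j) - ZZ $$ (0,j))"
  proof (rule sum.cong)
    fix j assume "j \<in> {..<n}"
    then have j: "j < n" by simp
    then show "pe j * mfpt Q 0 j = ZZ $$ (j,j) - ZZ $$ (0,j)"
      using mfpt_formula[OF j n0] pipos[OF j] by (simp add: pe_def)
  qed simp
  also have "\<dots> = (\<Sum>k<n. ZZ $$ (k,k)) - 1" using Z_row[OF n0] by (simp add: sum_subtractf)
  finally show ?thesis .
qed


lemma trace_sim: fixes X W W' :: "real mat" assumes X: "X \<in> carrier_mat n n" and W: "W \<in> carrier_mat n n" and W': "W' \<in> carrier_mat n n"
  and WW: "W * W' = 1\<^sub>m n"
  shows "(\<Sum>k<n. (W' * X * W) $$ (k,k)) = (\<Sum>k<n. X $$ (k,k))"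
proof -
  have "(\<Sum>k<n. (W' * X * W) $$ (k,k)) = (\<Sum>k<n. \<Sum>q<n. (\<Sum>p<n. W' $$ (k,p) * X $$ (p,q)) * W $$ (q,k))"
  proof (intro sum.cong refl)
    fix k assume k: "k \<in> {..<n}"
    have WX: "W' * X \<in> carrier_mat n n" using X W' by simp
    show "(W' * X * W) $$ (k,k) = (\<Sum>q<n. (\<Sum>p<n. W' $$ (k,p) * X $$ (p,q)) * W $$ (q,k))"
      using mult_entry[OF WX W, of k k] k mult_entry[OF W' X, of k] by (simp del: assoc_mult_mat)
  qed
  also have "\<dots> = (\<Sum>k<n. \<Sum>q<n. \<Sum>p<n. X $$ (p,q) * (W $$ (q,k) * W' $$ (k,p)))"
    unfolding sum_distrib_right by (intro sum.cong refl) (simp add: mult_ac)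
  also have "\<dots> = (\<Sum>q<n. \<Sum>k<n. \<Sum>p<n. X $$ (p,q) * (W $$ (q,k) * W' $$ (k,p)))"
    by (rule sum.swap)
  also have "\<dots> = (\<Sum>q<n. \<Sum>p<n. \<Sum>k<n. X $$ (p,q) * (W $$ (q,k) * W' $$ (k,p)))"
    by (intro sum.cong refl sum.swap)
  also have "\<dots> = (\<Sum>q<n. \<Sum>p<n. X $$ (p,q) * (W * W') $$ (q,p))"
    using W W' by (intro sum.cong refl) (simp add: mult_entry[of _ n n _ n] sum_distrib_left del: index_mult_mat)
  also have "\<dots> = (\<Sum>q<n. \<Sum>p<n. (if p = q then 1 else 0) * X $$ (p,q))"
    unfolding WW by (intro sum.cong refl) auto
  also have "\<dots> = (\<Sum>q<n. X $$ (q,q))"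
    by (intro sum.cong refl) (simp add: delta_sum')
  finally show ?thesis .
qed

lemma trace_sq:
  assumes cp: "char_poly Q = (\<Prod>l\<leftarrow>ls. [:- l, 1:])" and len: "length ls = n" and l0: "ls ! 0 = 1" and n0: "0 < n"
  shows "(\<Sum>k<n. \<Sum>l<n. ZZ $$ (k,l) * ZZ $$ (l,k)) = 1 + (\<Sum>l\<in>{1..<n}. 1 / (1 - ls ! l)^2)"
proof -
  obtain B W W' where sch: "schur_decomposition Q ls = (B,W,W')" by (cases "schur_decomposition Q ls") auto
  from schur_decomposition[OF Qc cp sch]
  have sim: "similar_mat_wit Q B W W'" and ut: "upper_triangular B" and dg: "diag_mat B = ls" by auto
  from sim have Bc: "B \<in> carrier_mat n n" and Wc: "W \<in> carrier_mat n n" and W'c: "W' \<in> carrier_mat n n"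
    and WW': "W * W' = 1\<^sub>m n" and W'W: "W' * W = 1\<^sub>m n" and QB: "Q = W * B * W'"
    unfolding similar_mat_wit_def Let_def dimQ by auto
  note cs = Bc Wc W'c Nc Z(1) Qc
  have Bd: "B $$ (l,l) = ls ! l" if "l < n" for l
  proof -
    have "ls ! l = diag_mat B ! l" using dg by simp
    also have "\<dots> = B $$ (l,l)" unfolding diag_mat_def using that Bc by simp
    finally show ?thesis by simp
  qed
  have Bl: "B $$ (k,l) = 0" if "l < k" "k < n" for k l
    using ut that Bc unfolding upper_triangular_def by auto
  have QW: "Q * W = W * B"
  proof -
    have "Q * W = W * B * (W' * W)" unfolding QB using cs by (simp add: assoc_mult_mat[of _ n n _ n _ n])
    then show ?thesis using cs W'W by simp
  qed
  have WB0: "(W * B) $$ (k,0) = W $$ (k,0)" if k: "k < n" for k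
  proof -
    have "(W * B) $$ (k,0) = (\<Sum>m<n. W $$ (k,m) * B $$ (m,0))" using k n0 cs by (simp add: mult_entry[of _ n n] del: index_mult_mat)
    also have "\<dots> = (\<Sum>m<n. if m = 0 then W $$ (k,0) else 0)"
      using Bl Bd[OF n0] l0 by (intro sum.cong refl) auto
    finally show ?thesis using n0 by simp
  qed
  have harm: "(\<Sum>l<n. Q $$ (k,l) * W $$ (l,0)) = W $$ (k,0)" if k: "k < n" for k
    using mult_entry[OF Qc Wc k n0] QW WB0[OF k] by simp
  define c where "c = W $$ (0,0)"
  have Wc0: "W $$ (k,0) = c" if "k < n" for k
    unfolding c_def using harm_const[of "\<lambda>l. W $$ (l,0)", OF harm that n0] .
  have W'row: "c * (\<Sum>m<n. W' $$ (k,m)) = (if k = 0 then 1 else 0)" if k: "k < n" for k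
  proof -
    have "(if k = 0 then 1 else 0) = (W' * W) $$ (k,0)" using W'W k n0 by simp
    also have "\<dots> = (\<Sum>m<n. W' $$ (k,m) * W $$ (m,0))" using mult_entry[OF W'c Wc k n0] .
    also have "\<dots> = c * (\<Sum>m<n. W' $$ (k,m))" using Wc0 by (simp add: sum_distrib_left mult.commute)
    finally show ?thesis by simp
  qed
  have c0: "c \<noteq> 0" using W'row[OF n0] by auto
  define \<sigma> where "\<sigma> l = (\<Sum>q<n. pp q * W $$ (q,l))" for l
  have sig0: "\<sigma> 0 = c" unfolding \<sigma>_def using Wc0 pisum by (simp add: sum_distrib_right[symmetric])
  define M where "M = W' * NN * W"
  have Mc: "M \<in> carrier_mat n n" unfolding M_def using cs by simp
  have NW: "(NN * W) $$ (p,l) = W $$ (p,l) - (W * B) $$ (p,l) + \<sigma> l" if "p < n" "l < n" for p l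
  proof -
    have "(NN * W) $$ (p,l) = (\<Sum>q<n. (if p = q then 1 else 0) * W $$ (q,l) - Q $$ (p,q) * W $$ (q,l) + pp q * W $$ (q,l))"
      using that cs by (simp add: mult_entry[of _ n n] N_entry algebra_simps del: index_mult_mat)
    also have "\<dots> = W $$ (p,l) - (Q * W) $$ (p,l) + \<sigma> l"
      unfolding sum.distrib sum_subtractf \<sigma>_def using that cs by (simp add: delta_sum mult_entry[of _ n n] del: index_mult_mat)
    finally show ?thesis unfolding QW .
  qed
  have Me: "M $$ (k,l) = (if k = l then 1 else 0) - B $$ (k,l) + (if k = 0 then \<sigma> l / c else 0)" if k: "k < n" and l: "l < n" for k l
  proof -
    have "M $$ (k,l) = (\<Sum>p<n. W' $$ (k,p) * (NN * W) $$ (p,l))"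
    proof -
      have NWc: "NN * W \<in> carrier_mat n n" using cs by simp
      have "M = W' * (NN * W)" unfolding M_def using cs by (simp add: assoc_mult_mat[of _ n n _ n _ n] del: index_mult_mat)
      then show ?thesis using mult_entry[OF W'c NWc k l] by simp
    qed
    also have "\<dots> = (\<Sum>p<n. W' $$ (k,p) * W $$ (p,l) - W' $$ (k,p) * (W * B) $$ (p,l) + W' $$ (k,p) * \<sigma> l)"
      using l by (intro sum.cong refl) (simp add: NW algebra_simps)
    also have "\<dots> = (W' * W) $$ (k,l) - (W' * (W * B)) $$ (k,l) + (\<Sum>p<n. W' $$ (k,p)) * \<sigma> l"
    proof -
      have WBc: "W * B \<in> carrier_mat n n" using cs by simp
      show ?thesis unfolding sum.distrib sum_subtractf sum_distrib_right
        using mult_entry[OF W'c Wc k l] mult_entry[OF W'c WBc k l] by (simp del: index_mult_mat)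
    qed
    also have "W' * (W * B) = B" using cs W'W by (simp add: assoc_mult_mat[of _ n n _ n _ n, symmetric])
    also have "(\<Sum>p<n. W' $$ (k,p)) * \<sigma> l = (if k = 0 then \<sigma> l / c else 0)"
      using W'row[OF k] c0 by (auto simp: field_simps)
    finally show ?thesis using W'W k l by simp
  qed
  have Mut: "upper_triangular M" unfolding upper_triangular_def using Mc Me Bl by auto
  have M00: "M $$ (0,0) = 1" using Me[OF n0 n0] Bd[OF n0] l0 sig0 c0 by simp
  have Mll: "M $$ (l,l) = 1 - ls ! l" if "0 < l" "l < n" for l using Me[OF that(2) that(2)] Bd[OF that(2)] that by simp
  define Y where "Y = W' * ZZ * W"
  have Yc: "Y \<in> carrier_mat n n" unfolding Y_def using cs by simp
  have h1: "\<And>X. X \<in> carrier_mat n n \<Longrightarrow> W * (W' * X) = X"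
    using cs WW' by (simp add: assoc_mult_mat[of _ n n _ n _ n, symmetric])
  have h2: "\<And>X. X \<in> carrier_mat n n \<Longrightarrow> ZZ * (NN * X) = X"
    using cs Z(3) by (simp add: assoc_mult_mat[of _ n n _ n _ n, symmetric])
  have h3: "\<And>X. X \<in> carrier_mat n n \<Longrightarrow> NN * (ZZ * X) = X"
    using cs Z(2) by (simp add: assoc_mult_mat[of _ n n _ n _ n, symmetric])
  have MY: "M * Y = 1\<^sub>m n" unfolding M_def Y_def using cs h1 h3 W'W
    by (simp add: assoc_mult_mat[of _ n n _ n _ n])
  have YM: "Y * M = 1\<^sub>m n" unfolding M_def Y_def using cs h1 h2 W'W
    by (simp add: assoc_mult_mat[of _ n n _ n _ n])
  have "det M * det Y = 1" using det_mult[OF Mc Yc] MY by simp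
  hence "det M \<noteq> 0" by auto
  hence "(\<Prod>i = 0..<n. M $$ (i,i)) \<noteq> 0"
    using det_upper_triangular[OF Mut Mc] Mc by (simp add: prod_list_diag_prod)
  hence Mnz: "M $$ (k,k) \<noteq> 0" if "k < n" for k using that by auto
  have YMe: "(\<Sum>m<n. Y $$ (k,m) * M $$ (m,l)) = (if k = l then 1 else 0)" if "k < n" "l < n" for k l
    using mult_entry[OF Yc Mc that] YM that by simp
  have Ylow: "\<forall>k. l < k \<longrightarrow> k < n \<longrightarrow> Y $$ (k,l) = 0" for l
  proof (induction l rule: less_induct)
    case (less l)
    show ?case
    proof (intro allI impI)
      fix k assume lk: "l < k" and k: "k < n"
      have "0 = (\<Sum>m<n. Y $$ (k,m) * M $$ (m,l))" using YMe[OF k, of l] lk k by simp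
      also have "\<dots> = (\<Sum>m<n. if m = l then Y $$ (k,l) * M $$ (l,l) else 0)"
      proof (intro sum.cong refl)
        fix m assume m: "m \<in> {..<n}"
        show "Y $$ (k,m) * M $$ (m,l) = (if m = l then Y $$ (k,l) * M $$ (l,l) else 0)"
        proof (cases "m < l")
          case True then show ?thesis using less[OF True] lk k by auto
        next
          case False then show ?thesis using Mut Mc m unfolding upper_triangular_def by auto
        qed
      qed
      also have "\<dots> = Y $$ (k,l) * M $$ (l,l)" using lk k by simp
      finally show "Y $$ (k,l) = 0" using Mnz[of l] lk k by simp
    qed
  qed
  have Ydiag: "Y $$ (k,k) * M $$ (k,k) = 1" if k: "k < n" for k
  proof -
    have "1 = (\<Sum>m<n. Y $$ (k,m) * M $$ (m,k))" using YMe[OF k k] by simp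
    also have "\<dots> = (\<Sum>m<n. if m = k then Y $$ (k,k) * M $$ (k,k) else 0)"
    proof (intro sum.cong refl)
      fix m assume m: "m \<in> {..<n}"
      show "Y $$ (k,m) * M $$ (m,k) = (if m = k then Y $$ (k,k) * M $$ (k,k) else 0)"
      proof (cases "m < k")
        case True then show ?thesis using Ylow[of m] k by auto
      next
        case False then show ?thesis using Mut Mc m unfolding upper_triangular_def by auto
      qed
    qed
    also have "\<dots> = Y $$ (k,k) * M $$ (k,k)" using k by simp
    finally show ?thesis by simp
  qed
  have trY: "(\<Sum>k<n. \<Sum>l<n. Y $$ (k,l) * Y $$ (l,k)) = (\<Sum>k<n. (Y $$ (k,k))^2)"
  proof (intro sum.cong refl)
    fix k assume k: "k \<in> {..<n}"
    have "(\<Sum>l<n. Y $$ (k,l) * Y $$ (l,k)) = (\<Sum>l<n. if l = k then (Y $$ (k,k))^2 else 0)"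
    proof (intro sum.cong refl)
      fix l assume l: "l \<in> {..<n}"
      show "Y $$ (k,l) * Y $$ (l,k) = (if l = k then (Y $$ (k,k))^2 else 0)"
        using Ylow[of l] Ylow[of k] k l by (cases "l < k"; cases "k < l") (auto simp: power2_eq_square)
    qed
    then show "(\<Sum>l<n. Y $$ (k,l) * Y $$ (l,k)) = (Y $$ (k,k))^2" using k by simp
  qed
  have YY: "Y * Y = W' * (ZZ * ZZ) * W" unfolding Y_def using cs h1
    by (simp add: assoc_mult_mat[of _ n n _ n _ n])
  have "(\<Sum>k<n. \<Sum>l<n. ZZ $$ (k,l) * ZZ $$ (l,k)) = (\<Sum>k<n. (ZZ * ZZ) $$ (k,k))"
    using cs by (simp add: mult_entry[of _ n n] del: index_mult_mat)
  also have "\<dots> = (\<Sum>k<n. (Y * Y) $$ (k,k))"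
    unfolding YY using trace_sim[of "ZZ * ZZ" W W'] cs WW' by simp
  also have "\<dots> = (\<Sum>k<n. \<Sum>l<n. Y $$ (k,l) * Y $$ (l,k))"
    using Yc by (simp add: mult_entry[of _ n n] del: index_mult_mat)
  also have "\<dots> = (\<Sum>k<n. (Y $$ (k,k))^2)" by (rule trY)
  also have "\<dots> = (\<Sum>k\<in>{0..<n}. (Y $$ (k,k))^2)" by (simp add: lessThan_atLeast0)
  also have "\<dots> = (Y $$ (0,0))^2 + (\<Sum>k\<in>{1..<n}. (Y $$ (k,k))^2)"
    using n0 by (simp add: sum.atLeast_Suc_lessThan)
  also have "\<dots> = 1 + (\<Sum>l\<in>{1..<n}. 1 / (1 - ls ! l)^2)"
  proof -
    have "Y $$ (0,0) = 1" using Ydiag[OF n0] M00 by simp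
    moreover have "(Y $$ (k,k))^2 = 1 / (1 - ls ! k)^2" if "k \<in> {1..<n}" for k
    proof -
      have e: "Y $$ (k,k) * (1 - ls ! k) = 1" using Ydiag[of k] Mll[of k] that by simp
      then have nz: "1 - ls ! k \<noteq> 0" by auto
      then have "Y $$ (k,k) = 1 / (1 - ls ! k)" using e by (simp add: field_simps)
      then show ?thesis by (simp add: power_one_over)
    qed
    ultimately show ?thesis by simp
  qed
  finally show ?thesis .
qed

end

lemma sm:
  fixes N0 Z0 N1 Z1 :: "real mat" and u v :: "nat \<Rightarrow> real" and \<tau> :: real
  assumes c: "N0 \<in> carrier_mat n n" "Z0 \<in> carrier_mat n n" "N1 \<in> carrier_mat n n" "Z1 \<in> carrier_mat n n"
    and N0Z0: "N0 * Z0 = 1\<^sub>m n" and Z1N1: "Z1 * N1 = 1\<^sub>m n"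
    and N1e: "\<And>k l. k < n \<Longrightarrow> l < n \<Longrightarrow> N1 $$ (k,l) = N0 $$ (k,l) - \<tau> * u k * v l"
    and bnz: "1 - \<tau> * (\<Sum>m<n. v m * (\<Sum>p<n. Z0 $$ (m,p) * u p)) \<noteq> 0"
    and k: "k < n" and l: "l < n"
  shows "Z1 $$ (k,l) = Z0 $$ (k,l) + \<tau> / (1 - \<tau> * (\<Sum>m<n. v m * (\<Sum>p<n. Z0 $$ (m,p) * u p)))
            * (\<Sum>p<n. Z0 $$ (k,p) * u p) * (\<Sum>m<n. v m * Z0 $$ (m,l))"
proof -
  define a where "a k = (\<Sum>p<n. Z0 $$ (k,p) * u p)" for k
  define b where "b l = (\<Sum>m<n. v m * Z0 $$ (m,l))" for l
  define \<beta> where "\<beta> = (\<Sum>m<n. v m * a m)"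
  define s where "s = \<tau> / (1 - \<tau> * \<beta>)"
  have bnz': "1 - \<tau> * \<beta> \<noteq> 0" using bnz unfolding \<beta>_def a_def .
  have s1: "s * (1 - \<tau> * \<beta>) = \<tau>" unfolding s_def using bnz' by simp
  have N0Z0e: "(\<Sum>m<n. N0 $$ (k,m) * Z0 $$ (m,l)) = (if k = l then 1 else 0)" if "k < n" "l < n" for k l
    using mult_entry[OF c(1,2) that] N0Z0 that by simp
  have N0a: "(\<Sum>m<n. N0 $$ (k,m) * a m) = u k" if k: "k < n" for k
  proof -
    have "(\<Sum>m<n. N0 $$ (k,m) * a m) = (\<Sum>p<n. (\<Sum>m<n. N0 $$ (k,m) * Z0 $$ (m,p)) * u p)"
      unfolding a_def sum_distrib_left sum_distrib_right by (subst sum.swap) (simp add: mult.assoc)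
    also have "\<dots> = (\<Sum>p<n. (if k = p then 1 else 0) * u p)" using N0Z0e k by simp
    also have "\<dots> = u k" using k by (rule dsum)
    finally show ?thesis .
  qed
  define Y where "Y = mat n n (\<lambda>(k,l). Z0 $$ (k,l) + s * a k * b l)"
  have Yc: "Y \<in> carrier_mat n n" unfolding Y_def by simp
  have N1Y: "N1 * Y = 1\<^sub>m n"
  proof (rule eq_matI)
    fix k l assume k: "k < dim_row (1\<^sub>m n :: real mat)" and l: "l < dim_col (1\<^sub>m n :: real mat)"
    then have k: "k < n" and l: "l < n" by auto
    have "(N1 * Y) $$ (k,l) = (\<Sum>m<n. N1 $$ (k,m) * Y $$ (m,l))" using mult_entry[OF c(3) Yc k l] .
    also have "\<dots> = (\<Sum>m<n. N0 $$ (k,m) * Z0 $$ (m,l) + (s * b l) * (N0 $$ (k,m) * a m)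
                 - (\<tau> * u k) * (v m * Z0 $$ (m,l)) - (\<tau> * s * u k * b l) * (v m * a m))"
      using k l by (intro sum.cong refl) (simp add: N1e Y_def algebra_simps)
    also have "\<dots> = (if k = l then 1 else 0) + (s * b l) * u k - (\<tau> * u k) * b l - (\<tau> * s * u k * b l) * \<beta>"
      unfolding sum.distrib sum_subtractf sum_distrib_left[symmetric] using N0Z0e[OF k l] N0a[OF k]
      by (simp add: b_def \<beta>_def)
    also have "\<dots> = (if k = l then 1 else 0) + u k * b l * (s * (1 - \<tau> * \<beta>) - \<tau>)"
      by (simp add: algebra_simps)
    also have "\<dots> = (1\<^sub>m n :: real mat) $$ (k,l)" using s1 k l by simp
    finally show "(N1 * Y) $$ (k,l) = (1\<^sub>m n :: real mat) $$ (k,l)" .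
  qed (use c Yc in auto)
  have "Z1 = Z1 * (N1 * Y)" using N1Y c by simp
  also have "\<dots> = (Z1 * N1) * Y" using c Yc by (simp add: assoc_mult_mat[of _ n n _ n _ n])
  also have "\<dots> = Y" using Z1N1 Yc by simp
  finally have "Z1 $$ (k,l) = Y $$ (k,l)" by simp
  then show ?thesis using k l unfolding Y_def s_def \<beta>_def a_def b_def by simp
qed

lemma vsum:
  fixes g :: "nat \<Rightarrow> real"
  assumes "i < n" "j < n" "i \<noteq> j"
  shows "(\<Sum>l<n. g l * (if l = i then 1 else if l = j then -1 else 0)) = g i - g j"
proof -
  have "(\<Sum>l<n. g l * (if l = i then 1 else if l = j then -1 else 0)) =
        (\<Sum>l<n. (if l = i then g i else 0) + (if l = j then - g j else 0))"
    using assms by (intro sum.cong refl) auto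
  also have "\<dots> = g i - g j" unfolding sum.distrib using assms by simp
  finally show ?thesis .
qed

lemma two_le_sum:
  fixes f :: "nat \<Rightarrow> real"
  assumes "i < n" "j < n" "i \<noteq> j" "\<And>l. l < n \<Longrightarrow> f l \<ge> 0"
  shows "f i + f j \<le> (\<Sum>l<n. f l)"
proof -
  have "sum f {i,j} \<le> sum f {..<n}" using assms by (intro sum_mono2) auto
  then show ?thesis using assms by simp
qed

lemma cs2:
  fixes p q x y :: real
  assumes "x > 0" "y > 0"
  shows "(p - q)^2 \<le> (x * p^2 + y * q^2) * (1/x + 1/y)"
proof -
  have "(x * p^2 + y * q^2) * (1/x + 1/y) - (p - q)^2 = (x * p + y * q)^2 / (x * y)"
    using assms by (simp add: field_simps power2_eq_square)
  moreover have "(x * p + y * q)^2 / (x * y) \<ge> 0" using assms by simp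
  ultimately show ?thesis by linarith
qed

lemma Zsym:
  fixes N Z :: "real mat" and d :: "nat \<Rightarrow> real"
  assumes c: "N \<in> carrier_mat n n" "Z \<in> carrier_mat n n" and NZ: "N * Z = 1\<^sub>m n"
    and sym: "\<And>p m. p < n \<Longrightarrow> m < n \<Longrightarrow> d p * N $$ (p,m) = d m * N $$ (m,p)"
    and k: "k < n" and l: "l < n"
  shows "d k * Z $$ (k,l) = d l * Z $$ (l,k)"
proof -
  have NZe: "(\<Sum>m<n. N $$ (p,m) * Z $$ (m,q)) = (if p = q then 1 else 0)" if "p < n" "q < n" for p q
    using mult_entry[OF c that] NZ that by simp
  define X where "X = (\<Sum>p<n. \<Sum>m<n. Z $$ (p,k) * (d p * N $$ (p,m)) * Z $$ (m,l))"
  have "X = (\<Sum>p<n. Z $$ (p,k) * d p * (\<Sum>m<n. N $$ (p,m) * Z $$ (m,l)))"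
    unfolding X_def by (simp add: sum_distrib_left mult.assoc)
  also have "\<dots> = (\<Sum>p<n. (if p = l then 1 else 0) * (Z $$ (p,k) * d p))"
    using NZe l by (intro sum.cong refl) auto
  also have "\<dots> = Z $$ (l,k) * d l" using l by (rule dsum')
  finally have X1: "X = d l * Z $$ (l,k)" by simp
  have "X = (\<Sum>p<n. \<Sum>m<n. Z $$ (p,k) * (d m * N $$ (m,p)) * Z $$ (m,l))"
    unfolding X_def using sym by (intro sum.cong refl) auto
  also have "\<dots> = (\<Sum>m<n. \<Sum>p<n. Z $$ (p,k) * (d m * N $$ (m,p)) * Z $$ (m,l))"
    by (rule sum.swap)
  also have "\<dots> = (\<Sum>m<n. d m * Z $$ (m,l) * (\<Sum>p<n. N $$ (m,p) * Z $$ (p,k)))"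
    by (simp add: sum_distrib_left mult_ac)
  also have "\<dots> = (\<Sum>m<n. (if m = k then 1 else 0) * (d m * Z $$ (m,l)))"
    using NZe k by (intro sum.cong refl) auto
  also have "\<dots> = d k * Z $$ (k,l)" using k by (rule dsum')
  finally show ?thesis using X1 by simp
qed


theorem theorem8:
  fixes n i j :: nat and A :: "real mat"
    and d :: "nat \<Rightarrow> real" and v :: "nat \<Rightarrow> real"
    and At P :: "real \<Rightarrow> real mat" and f :: "real \<Rightarrow> real"
  assumes A_carrier: "A \<in> carrier_mat n n"
    and A_sym: "\<forall>k<n. \<forall>l<n. A $$ (k,l) = A $$ (l,k)"
    and A_nonneg: "\<forall>k<n. \<forall>l<n. A $$ (k,l) \<ge> 0"
    and d_def: "d = (\<lambda>k. \<Sum>l<n. A $$ (k,l))"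
    and d_pos: "\<forall>k<n. d k > 0"
    and conn: "connected_wgraph n A"
    and ij: "i < n" "j < n" "i \<noteq> j"
    and edge: "A $$ (i,j) > 0"
    and not_cut: "\<not> is_cut_edge n A i j"
    and v_def: "v = (\<lambda>k. if k = i then 1 else if k = j then -1 else 0)"
    and At_def: "At = (\<lambda>t. mat n n (\<lambda>(k,l). A $$ (k,l) + t * A $$ (i,j) * v k * v l))"
    and P_def: "P = (\<lambda>t. mat n n (\<lambda>(k,l). At t $$ (k,l) / d k))"
    and f_def: "f = (\<lambda>t. kemeny (P t))"
  shows "\<exists>D. (f has_real_derivative D) (at 0 within {0..1}) \<and> 0 \<le> D \<and>
           (\<forall>ls :: real list. length ls = n \<and> ls ! 0 = 1 \<and>
              char_poly (P 0) = (\<Prod>l\<leftarrow>ls. [:- l, 1:]) \<longrightarrow>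
              D \<le> A $$ (i,j) * (1 / d i + 1 / d j) * (\<Sum>l\<in>{1..<n}. 1 / (1 - ls ! l)^2))"
proof -
  have n0: "0 < n" using ij by simp
  define c where "c = A $$ (i,j)"
  have cpos: "c > 0" using edge c_def by simp
  have dp: "\<And>k. k < n \<Longrightarrow> d k > 0" using d_pos by simp
  define vol where "vol = (\<Sum>k<n. d k)"
  have volpos: "vol > 0" unfolding vol_def using dp n0 by (intro sum_pos) auto
  define pp where "pp k = d k / vol" for k
  have vsum0: "(\<Sum>l<n. v l) = 0" using vsum[OF ij, of "\<lambda>_. 1"] by (simp add: v_def)
  have vsumg: "\<And>g. (\<Sum>l<n. g l * v l) = g i - g j" using vsum[OF ij] by (simp add: v_def)
  have Pe: "\<And>t k l. k < n \<Longrightarrow> l < n \<Longrightarrow> P t $$ (k,l) = (A $$ (k,l) + t * c * v k * v l) / d k"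
    unfolding P_def At_def c_def by simp
  have Pc: "\<And>t. P t \<in> carrier_mat n n" unfolding P_def by simp
  have vv: "v k * v l \<ge> 0" if "\<not> ((k = i \<and> l = j) \<or> (k = j \<and> l = i))" for k l
    using that unfolding v_def by auto
  have vvm: "v k * v l = -1" if "(k = i \<and> l = j) \<or> (k = j \<and> l = i)" for k l
    using that ij unfolding v_def by auto
  have Acij: "A $$ (k,l) = c" if "(k = i \<and> l = j) \<or> (k = j \<and> l = i)" for k l
    using that A_sym ij c_def by auto
  have num_nn: "A $$ (k,l) + t * c * v k * v l \<ge> 0" if t: "0 \<le> t" "t < 1" and k: "k < n" and l: "l < n" for t k l
  proof (cases "(k = i \<and> l = j) \<or> (k = j \<and> l = i)")
    case True
    then have "A $$ (k,l) + t * c * v k * v l = c * (1 - t)" using Acij vvm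
      by (simp add: algebra_simps mult.assoc[of "t * c"])
    then show ?thesis using cpos t by simp
  next
    case False
    have "t * c * v k * v l = (t * c) * (v k * v l)" by (simp add: mult.assoc)
    moreover have "(t * c) * (v k * v l) \<ge> 0" using vv[OF False] cpos t by simp
    ultimately show ?thesis using A_nonneg k l by simp
  qed
  have Pnn: "P t $$ (k,l) \<ge> 0" if t: "0 \<le> t" "t < 1" and k: "k < n" and l: "l < n" for t k l
    using Pe[OF k l] num_nn[OF t k l] dp[OF k] by simp
  have rowA: "(\<Sum>l<n. A $$ (k,l) + t * c * v k * v l) = d k" for t k
  proof -
    have "(\<Sum>l<n. A $$ (k,l) + t * c * v k * v l) = d k + (t * c * v k) * (\<Sum>l<n. v l)"
      unfolding sum.distrib d_def sum_distrib_left by simp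
    then show ?thesis using vsum0 by simp
  qed
  have Prow: "(\<Sum>l<n. P t $$ (k,l)) = 1" if k: "k < n" for t k
  proof -
    have "(\<Sum>l<n. P t $$ (k,l)) = (\<Sum>l<n. A $$ (k,l) + t * c * v k * v l) / d k"
      unfolding sum_divide_distrib using Pe k by simp
    then show ?thesis using rowA dp[OF k] by simp
  qed
  have pppos: "\<And>k. k < n \<Longrightarrow> pp k > 0" unfolding pp_def using dp volpos by simp
  have ppsum: "(\<Sum>k<n. pp k) = 1" unfolding pp_def sum_divide_distrib[symmetric] vol_def[symmetric]
    using volpos by simp
  have pstat: "(\<Sum>k<n. pp k * P t $$ (k,l)) = pp l" if l: "l < n" for t l
  proof -
    have "(\<Sum>k<n. pp k * P t $$ (k,l)) = (\<Sum>k<n. A $$ (l,k) + t * c * v l * v k) / vol"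
      unfolding sum_divide_distrib
    proof (intro sum.cong refl)
      fix k assume k: "k \<in> {..<n}"
      then show "pp k * P t $$ (k,l) = (A $$ (l,k) + t * c * v l * v k) / vol"
        using Pe[of k l t] l dp[of k] A_sym by (simp add: pp_def field_simps)
    qed
    then show ?thesis using rowA unfolding pp_def by simp
  qed
  have Padj: "P t $$ (k,l) > 0" if t: "0 \<le> t" "t < 1" and kl: "(k,l) \<in> adj_rel n A" for t k l
  proof -
    from kl have k: "k < n" and l: "l < n" and Apos: "A $$ (k,l) > 0" unfolding adj_rel_def by auto
    have "A $$ (k,l) + t * c * v k * v l > 0"
    proof (cases "(k = i \<and> l = j) \<or> (k = j \<and> l = i)")
      case True
      then have "A $$ (k,l) + t * c * v k * v l = c * (1 - t)" using Acij vvm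
        by (simp add: algebra_simps mult.assoc[of "t * c"])
      then show ?thesis using cpos t by simp
    next
      case False
      have "t * c * v k * v l = (t * c) * (v k * v l)" by (simp add: mult.assoc)
      moreover have "(t * c) * (v k * v l) \<ge> 0" using vv[OF False] cpos t by simp
      ultimately show ?thesis using Apos by simp
    qed
    then show ?thesis using Pe[OF k l] dp[OF k] by simp
  qed
  have MK: "mk n (P t) A pp" if t: "0 \<le> t" "t < 1" for t
    using Pc Pnn[OF t] Prow pppos ppsum pstat conn Padj[OF t] by (intro mk.intro) auto
  have MK0: "mk n (P 0) A pp" using MK[of 0] by simp
  have fZ: "f t = (\<Sum>k<n. Zmat n (P t) pp $$ (k,k)) - 1" if t: "0 \<le> t" "t < 1" for t
    unfolding f_def using mk.kemeny_formula[OF MK[OF t] n0] by simp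
  define Z0 where "Z0 = Zmat n (P 0) pp"
  define N0 where "N0 = Nmat n (P 0) pp"
  define u where "u k = v k / d k" for k
  have Nt: "Nmat n (P t) pp $$ (k,l) = N0 $$ (k,l) - (t * c) * u k * v l" if "k < n" "l < n" for t k l
    using that dp[of k] unfolding Nmat_def N0_def u_def by (simp add: Pe field_simps)
  define \<beta> where "\<beta> = (\<Sum>m<n. v m * (\<Sum>p<n. Z0 $$ (m,p) * u p))"
  define a where "a k = (\<Sum>p<n. Z0 $$ (k,p) * u p)" for k
  define b where "b l = (\<Sum>m<n. v m * Z0 $$ (m,l))" for l
  define \<gamma> where "\<gamma> = (\<Sum>k<n. a k * b k)"
  have Z0c: "Z0 \<in> carrier_mat n n" "N0 * Z0 = 1\<^sub>m n" and N0c: "N0 \<in> carrier_mat n n"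
    using mk.Z[OF MK0] mk.Nc[OF MK0] unfolding Z0_def N0_def by auto
  have trf: "(\<Sum>k<n. Zmat n (P t) pp $$ (k,k)) = (\<Sum>k<n. Z0 $$ (k,k)) + (t * c) / (1 - (t * c) * \<beta>) * \<gamma>"
    if t: "0 \<le> t" "t < 1" and bnz: "1 - (t * c) * \<beta> \<noteq> 0" for t
  proof -
    have Zt: "Zmat n (P t) pp \<in> carrier_mat n n" "Zmat n (P t) pp * Nmat n (P t) pp = 1\<^sub>m n"
      and Ntc: "Nmat n (P t) pp \<in> carrier_mat n n"
      using mk.Z[OF MK[OF t]] mk.Nc[OF MK[OF t]] by auto
    have "(\<Sum>k<n. Zmat n (P t) pp $$ (k,k)) = (\<Sum>k<n. Z0 $$ (k,k) + (t * c) / (1 - (t * c) * \<beta>) * (a k * b k))"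
    proof (intro sum.cong refl)
      fix k assume k: "k \<in> {..<n}"
      have N1e: "\<And>k l. k < n \<Longrightarrow> l < n \<Longrightarrow> Nmat n (P t) pp $$ (k,l) = N0 $$ (k,l) - (t * c) * u k * v l"
        using Nt by simp
      have kn: "k < n" using k by simp
      show "Zmat n (P t) pp $$ (k,k) = Z0 $$ (k,k) + (t * c) / (1 - (t * c) * \<beta>) * (a k * b k)"
        using sm[OF N0c Z0c(1) Ntc Zt(1) Z0c(2) Zt(2) N1e bnz[unfolded \<beta>_def] kn kn]
        unfolding \<beta>_def a_def b_def by (simp add: mult.assoc)
    qed
    then show ?thesis unfolding \<gamma>_def by (simp add: sum.distrib sum_distrib_left)
  qed
  define C where "C = (\<Sum>k<n. Z0 $$ (k,k)) - 1"
  define g where "g t = C + (t * c) / (1 - (t * c) * \<beta>) * \<gamma>" for t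
  define \<delta> where "\<delta> = 1 / (2 * (\<bar>c * \<beta>\<bar> + 1))"
  have \<delta>pos: "\<delta> > 0" unfolding \<delta>_def by (simp add: add_pos_nonneg)
  have gf: "g x = f x" if x: "x \<in> {0..1}" and dx: "dist x 0 < \<delta>" for x
  proof -
    have x0: "0 \<le> x" and xd: "x < \<delta>" using x dx by (auto simp: dist_real_def)
    have "x * (\<bar>c * \<beta>\<bar> + 1) < \<delta> * (\<bar>c * \<beta>\<bar> + 1)"
      using xd by (intro mult_strict_right_mono) auto
    also have "\<dots> = 1/2" unfolding \<delta>_def by (simp add: field_simps)
    finally have xb: "x * (\<bar>c * \<beta>\<bar> + 1) < 1/2" .
    have "x * \<bar>c * \<beta>\<bar> \<le> x * (\<bar>c * \<beta>\<bar> + 1)" using x0 by (intro mult_left_mono) auto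
    then have "\<bar>(x * c) * \<beta>\<bar> < 1/2" using xb x0 by (simp add: abs_mult)
    then have "(x * c) * \<beta> < 1/2" by (simp add: abs_less_iff)
    then have bnz: "1 - (x * c) * \<beta> \<noteq> 0" by linarith
    have "x * \<bar>c * \<beta>\<bar> \<ge> 0" using x0 by simp
    then have "x \<le> x * (\<bar>c * \<beta>\<bar> + 1)" by (simp add: distrib_left)
    then have x1: "x < 1" using xb by linarith
    show ?thesis unfolding g_def C_def using fZ[OF x0 x1] trf[OF x0 x1 bnz] Z0_def by simp
  qed
  have gd: "(g has_real_derivative c * \<gamma>) (at 0)"
    unfolding g_def by (auto intro!: derivative_eq_intros)
  have fd: "(f has_real_derivative c * \<gamma>) (at 0 within {0..1})"
    by (rule has_field_derivative_transform_within[OF has_field_derivative_at_within[OF gd] \<delta>pos _ gf]) auto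
  have N0sym: "d p * N0 $$ (p,m) = d m * N0 $$ (m,p)" if "p < n" "m < n" for p m
  proof -
    have "d p * N0 $$ (p,m) = (if p = m then d p else 0) - A $$ (p,m) + d p * d m / vol"
      using that dp[of p] unfolding N0_def Nmat_def pp_def by (simp add: Pe field_simps)
    moreover have "d m * N0 $$ (m,p) = (if p = m then d p else 0) - A $$ (m,p) + d m * d p / vol"
      using that dp[of m] unfolding N0_def Nmat_def pp_def by (auto simp: Pe field_simps)
    ultimately show ?thesis using A_sym that by (simp add: mult.commute)
  qed
  have symZ: "d k * Z0 $$ (k,l) = d l * Z0 $$ (l,k)" if "k < n" "l < n" for k l
    using Zsym[OF N0c Z0c(1) Z0c(2) N0sym that] .
  have ae: "a k = Z0 $$ (k,i) / d i - Z0 $$ (k,j) / d j" for k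
  proof -
    have "a k = (\<Sum>p<n. (Z0 $$ (k,p) / d p) * v p)" unfolding a_def u_def
      by (intro sum.cong refl) simp
    also have "\<dots> = Z0 $$ (k,i) / d i - Z0 $$ (k,j) / d j" by (rule vsumg)
    finally show ?thesis .
  qed
  have be: "b k = Z0 $$ (i,k) - Z0 $$ (j,k)" for k
  proof -
    have "b k = (\<Sum>m<n. Z0 $$ (m,k) * v m)" unfolding b_def by (simp add: mult.commute)
    also have "\<dots> = Z0 $$ (i,k) - Z0 $$ (j,k)" by (rule vsumg)
    finally show ?thesis .
  qed
  have ba: "b k = d k * a k" if k: "k < n" for k
  proof -
    have "Z0 $$ (i,k) = d k * Z0 $$ (k,i) / d i" using symZ[OF ij(1) k] dp[OF ij(1)]
      by (simp add: field_simps)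
    moreover have "Z0 $$ (j,k) = d k * Z0 $$ (k,j) / d j" using symZ[OF ij(2) k] dp[OF ij(2)]
      by (simp add: field_simps)
    ultimately show ?thesis unfolding be ae by (simp add: right_diff_distrib)
  qed
  have \<gamma>e: "\<gamma> = (\<Sum>k<n. d k * (a k)^2)"
    unfolding \<gamma>_def by (intro sum.cong refl) (simp add: ba power2_eq_square)
  have \<gamma>nn: "\<gamma> \<ge> 0" unfolding \<gamma>e using dp by (intro sum_nonneg mult_nonneg_nonneg) (auto simp: less_imp_le)
  define R where "R k l = Z0 $$ (k,l) / d l - 1 / vol" for k l
  have aR: "a k = R k i - R k j" for k unfolding ae R_def by simp
  have dR1: "d l * R k l = Z0 $$ (k,l) - pp l" if "l < n" for k l
    unfolding R_def pp_def using dp[OF that] by (simp add: field_simps)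
  have dR2: "d k * R k l = Z0 $$ (l,k) - pp k" if "k < n" "l < n" for k l
  proof -
    have "d k * (Z0 $$ (k,l) / d l) = (d k * Z0 $$ (k,l)) / d l" by simp
    also have "\<dots> = Z0 $$ (l,k)" using symZ[OF that] dp[OF that(2)] by simp
    finally show ?thesis unfolding R_def pp_def by (simp add: right_diff_distrib)
  qed
  have Zrow: "(\<Sum>l<n. Z0 $$ (k,l)) = 1" if "k < n" for k
    using mk.Z_row[OF MK0 that] unfolding Z0_def .
  have key: "(\<Sum>k<n. \<Sum>l<n. d k * (d l * (R k l)^2)) = (\<Sum>k<n. \<Sum>l<n. Z0 $$ (k,l) * Z0 $$ (l,k)) - 1"
  proof -
    have "(\<Sum>k<n. \<Sum>l<n. d k * (d l * (R k l)^2)) = (\<Sum>k<n. \<Sum>l<n. (Z0 $$ (k,l) - pp l) * (Z0 $$ (l,k) - pp k))"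
    proof (intro sum.cong refl)
      fix k l assume "k \<in> {..<n}" "l \<in> {..<n}"
      then have k: "k < n" and l: "l < n" by auto
      have "d k * (d l * (R k l)^2) = (d l * R k l) * (d k * R k l)" by (simp add: power2_eq_square mult_ac)
      then show "d k * (d l * (R k l)^2) = (Z0 $$ (k,l) - pp l) * (Z0 $$ (l,k) - pp k)"
        using dR1[OF l] dR2[OF k l] by simp
    qed
    also have "\<dots> = (\<Sum>k<n. \<Sum>l<n. Z0 $$ (k,l) * Z0 $$ (l,k)) - (\<Sum>k<n. pp k * (\<Sum>l<n. Z0 $$ (k,l)))
        - (\<Sum>k<n. \<Sum>l<n. pp l * Z0 $$ (l,k)) + (\<Sum>k<n. pp k * (\<Sum>l<n. pp l))"
      by (simp add: algebra_simps sum.distrib sum_subtractf sum_distrib_left)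
    also have "(\<Sum>k<n. pp k * (\<Sum>l<n. Z0 $$ (k,l))) = 1" using Zrow ppsum by simp
    also have "(\<Sum>k<n. \<Sum>l<n. pp l * Z0 $$ (l,k)) = (\<Sum>l<n. pp l * (\<Sum>k<n. Z0 $$ (l,k)))"
      unfolding sum_distrib_left by (rule sum.swap)
    also have "\<dots> = 1" using Zrow ppsum by simp
    also have "(\<Sum>k<n. pp k * (\<Sum>l<n. pp l)) = 1" using ppsum by (simp add: sum_distrib_right[symmetric])
    finally show ?thesis by simp
  qed
  have \<gamma>le: "\<gamma> \<le> (1 / d i + 1 / d j) * ((\<Sum>k<n. \<Sum>l<n. Z0 $$ (k,l) * Z0 $$ (l,k)) - 1)"
  proof -
    have "\<gamma> \<le> (\<Sum>k<n. d k * ((d i * (R k i)^2 + d j * (R k j)^2) * (1 / d i + 1 / d j)))"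
      unfolding \<gamma>e aR using dp ij by (intro sum_mono mult_left_mono cs2) (auto simp: less_imp_le)
    also have "\<dots> = (1 / d i + 1 / d j) * (\<Sum>k<n. d k * (d i * (R k i)^2 + d j * (R k j)^2))"
      by (simp add: sum_distrib_left mult_ac)
    also have "\<dots> \<le> (1 / d i + 1 / d j) * (\<Sum>k<n. d k * (\<Sum>l<n. d l * (R k l)^2))"
      using dp ij by (intro mult_left_mono sum_mono two_le_sum) (auto intro!: add_nonneg_nonneg simp: less_imp_le)
    also have "\<dots> = (1 / d i + 1 / d j) * ((\<Sum>k<n. \<Sum>l<n. Z0 $$ (k,l) * Z0 $$ (l,k)) - 1)"
      using key by (simp add: sum_distrib_left)
    finally show ?thesis .
  qed
  show ?thesis
  proof (intro exI conjI allI impI)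
    show "(f has_real_derivative c * \<gamma>) (at 0 within {0..1})" by (rule fd)
    show "0 \<le> c * \<gamma>" using cpos \<gamma>nn by simp
    fix ls :: "real list"
    assume H: "length ls = n \<and> ls ! 0 = 1 \<and> char_poly (P 0) = (\<Prod>l\<leftarrow>ls. [:- l, 1:])"
    have tr: "(\<Sum>k<n. \<Sum>l<n. Z0 $$ (k,l) * Z0 $$ (l,k)) = 1 + (\<Sum>l\<in>{1..<n}. 1 / (1 - ls ! l)^2)"
      using mk.trace_sq[OF MK0, of ls] H n0 unfolding Z0_def by simp
    have "c * \<gamma> \<le> c * ((1 / d i + 1 / d j) * (\<Sum>l\<in>{1..<n}. 1 / (1 - ls ! l)^2))"
      using \<gamma>le tr cpos by (intro mult_left_mono) auto
    then show "c * \<gamma> \<le> A $$ (i,j) * (1 / d i + 1 / d j) * (\<Sum>l\<in>{1..<n}. 1 / (1 - ls ! l)^2)"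
      unfolding c_def by (simp add: mult.assoc)
  qed
qed

end
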